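(* Let $\mathcal{X}=(X_1,\ldots,X_r)$ be a directed path-decomposition of a digraph $G=(V,E)$. Let $A,B\subseteq V$ with $A\cap B=\emptyset$ and $\{(u,v),(v,u) : u\in A, v\in B\}\subseteq E$. If there is some $i$, $1\le i\le r$, with $A\subseteq X_i$, then there are $1\le i_1\le i_2\le r$ such that 1. $A\subseteq X_i$ for all $i$ with $i_1\le i\le i_2$, 2. $B\subseteq \bigcup_{i=i_1}^{i_2}X_i$, and 3. $(X'_{i_1},\ldots,X'_{i_2})$, where $X'_i=X_i\cap(A\cup B)$, is a directed path-decomposition of the subdigraph of $G$ induced by $A\cup B$.
   Context: Digraphs are finite, without loops or multiple arcs. A directed path-decomposition of a digraph $G=(V,E)$ is a sequence $(X_1,\ldots,X_r)$ of subsets of $V$ such that: (i) $X_1\cup\cdots\cup X_r=V$; (ii) for each $(u,v)\in E$ there are $i\le j$ with $u\in X_i$, $v\in X_j$; (iii) if $u\in X_i$ and $u\in X_j$ with $i\le j$, then $u\in X_\ell$ for all $i\le\ell\le j$. *)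

theory Defs
  imports Main
begin

text \<open>A digraph is a pair (V, E) with V finite, E a set of arcs between vertices of V,
 with no loops (no multiple arcs is automatic for a relation).\<close>
definition digraph :: "'a set \<Rightarrow> ('a \<times> 'a) set \<Rightarrow> bool" where
  "digraph V E \<longleftrightarrow> finite V \<and> E \<subseteq> V \<times> V \<and> (\<forall>v. (v, v) \<notin> E)"

text \<open>Directed path-decomposition; the sequence (X_1,...,X_r) is the list Xs,
 with X_i = Xs ! (i-1).\<close>
definition dir_path_decomp :: "'a set \<Rightarrow> ('a \<times> 'a) set \<Rightarrow> 'a set list \<Rightarrow> bool" where
  "dir_path_decomp V E Xs \<longleftrightarrow>
     \<Union>(set Xs) = V \<and>
     (\<forall>(u, v) \<in> E. \<exists>i j. i \<le> j \<and> j < length Xs \<and> u \<in> Xs ! i \<and> v \<in> Xs ! j) \<and>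
     (\<forall>u i j l. i \<le> l \<and> l \<le> j \<and> j < length Xs \<and> u \<in> Xs ! i \<and> u \<in> Xs ! j \<longrightarrow> u \<in> Xs ! l)"

definition induced_arcs :: "('a \<times> 'a) set \<Rightarrow> 'a set \<Rightarrow> ('a \<times> 'a) set" where
  "induced_arcs E S = E \<inter> (S \<times> S)"

end

theory Submission
  imports Defs
begin

theorem lemma3p7:
  fixes V :: "'a set" and E :: "('a \<times> 'a) set" and Xs :: "'a set list"
    and A B :: "'a set"
  assumes "digraph V E"
    and "dir_path_decomp V E Xs"
    and "A \<subseteq> V" and "B \<subseteq> V"
    and "A \<inter> B = {}"
    and "\<forall>u\<in>A. \<forall>v\<in>B. (u, v) \<in> E \<and> (v, u) \<in> E"
    and "\<exists>i. 1 \<le> i \<and> i \<le> length Xs \<and> A \<subseteq> Xs ! (i - 1)"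
  shows "\<exists>i1 i2. 1 \<le> i1 \<and> i1 \<le> i2 \<and> i2 \<le> length Xs \<and>
           (\<forall>i. i1 \<le> i \<and> i \<le> i2 \<longrightarrow> A \<subseteq> Xs ! (i - 1)) \<and>
           B \<subseteq> (\<Union>i\<in>{i1..i2}. Xs ! (i - 1)) \<and>
           dir_path_decomp (A \<union> B) (induced_arcs E (A \<union> B))
             (map (\<lambda>i. Xs ! (i - 1) \<inter> (A \<union> B)) [i1..<Suc i2])"
proof -
  define n where "n = length Xs"
  have cov: "\<Union>(set Xs) = V" using assms(2) unfolding dir_path_decomp_def by blast
  have edg: "\<And>u v. (u,v) \<in> E \<Longrightarrow> \<exists>i j. i \<le> j \<and> j < n \<and> u \<in> Xs ! i \<and> v \<in> Xs ! j"
    using assms(2) unfolding dir_path_decomp_def n_def by blast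
  have conv: "\<And>u i j l. i \<le> l \<Longrightarrow> l \<le> j \<Longrightarrow> j < n \<Longrightarrow> u \<in> Xs ! i \<Longrightarrow> u \<in> Xs ! j \<Longrightarrow> u \<in> Xs ! l"
    using assms(2) unfolding dir_path_decomp_def n_def by blast
  have inV: "\<And>u. u \<in> V \<Longrightarrow> \<exists>j<n. u \<in> Xs ! j"
    using cov unfolding n_def by (auto simp: in_set_conv_nth)
  define I where "I = {i. i < n \<and> A \<subseteq> Xs ! i}"
  have finI: "finite I" unfolding I_def by auto
  have neI: "I \<noteq> {}"
  proof -
    obtain i where i: "1 \<le> i" "i \<le> length Xs" "A \<subseteq> Xs ! (i - 1)" using assms(7) by blast
    then have "i - 1 \<in> I" unfolding I_def n_def by auto
    then show ?thesis by blast
  qed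
  define L where "L = Min I"
  define R where "R = Max I"
  have LI: "L \<in> I" unfolding L_def using finI neI by simp
  have RI: "R \<in> I" unfolding R_def using finI neI by simp
  have LR: "L \<le> R" unfolding L_def R_def using finI neI by simp
  have Rn: "R < n" using RI unfolding I_def by simp
  have AL: "A \<subseteq> Xs ! L" and AR: "A \<subseteq> Xs ! R" using LI RI unfolding I_def by auto
  have Amid: "\<And>i. L \<le> i \<Longrightarrow> i \<le> R \<Longrightarrow> A \<subseteq> Xs ! i"
    using AL AR conv Rn by blast
  have belowL: "\<And>i. i < L \<Longrightarrow> i \<notin> I" unfolding L_def using finI
    using Min_le not_le by blast
  have aboveR: "\<And>i. R < i \<Longrightarrow> i \<notin> I" unfolding R_def using finI
    using Max_ge not_le by blast
  have inB: "\<exists>l. L \<le> l \<and> l \<le> R \<and> b \<in> Xs ! l" if bB: "b \<in> B" for b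
  proof (rule ccontr)
    assume no: "\<not> (\<exists>l. L \<le> l \<and> l \<le> R \<and> b \<in> Xs ! l)"
    obtain j where j: "j < n" "b \<in> Xs ! j" using inV bB assms(4) by blast
    show False
    proof (cases "j < L")
      case True
      have allbelow: "j' < L" if "j' < n" "b \<in> Xs ! j'" for j'
      proof (rule ccontr)
        assume "\<not> j' < L"
        then have "b \<in> Xs ! L" using conv[of j L j' b] True that j by auto
        then show False using no LR by blast
      qed
      have "L - 1 \<notin> I" using belowL True by simp
      then obtain a where a: "a \<in> A" "a \<notin> Xs ! (L - 1)" unfolding I_def using True Rn LR by auto
      obtain i j2 where ij: "i \<le> j2" "j2 < n" "a \<in> Xs ! i" "b \<in> Xs ! j2"
        using edg assms(6) a(1) bB by blast
      have "j2 < L" using allbelow ij by blast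
      then have "a \<in> Xs ! (L - 1)" using conv[of i "L - 1" L a] ij AL a(1) LR Rn by auto
      then show False using a by blast
    next
      case False
      then have jR: "R < j" using no j by (meson not_le)
      have allabove: "R < j'" if "j' < n" "b \<in> Xs ! j'" for j'
      proof (rule ccontr)
        assume "\<not> R < j'"
        then have "b \<in> Xs ! R" using conv[of j' R j b] jR that j by auto
        then show False using no LR by blast
      qed
      have "R + 1 \<notin> I" using aboveR by simp
      then obtain a where a: "a \<in> A" "a \<notin> Xs ! (R + 1)" unfolding I_def using jR j by auto
      obtain i j2 where ij: "i \<le> j2" "j2 < n" "b \<in> Xs ! i" "a \<in> Xs ! j2"
        using edg assms(6) a(1) bB by blast
      have "R < i" using allabove ij by auto
      then have "a \<in> Xs ! (R + 1)" using conv[of R "R + 1" j2 a] ij AR a(1) by auto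
      then show False using a by blast
    qed
  qed
  define S where "S = A \<union> B"
  have inS: "\<exists>l. L \<le> l \<and> l \<le> R \<and> u \<in> Xs ! l" if "u \<in> S" for u
    using that inB AL LR unfolding S_def by blast
  define cl where "cl = (\<lambda>i::nat. max L (min R i))"
  have clR: "L \<le> cl i \<and> cl i \<le> R" for i unfolding cl_def using LR by auto
  have clmono: "i \<le> j \<Longrightarrow> cl i \<le> cl j" for i j unfolding cl_def by auto
  have clin: "u \<in> Xs ! cl i" if uh: "u \<in> S" "i < n" "u \<in> Xs ! i" for u i
  proof -
    obtain l where l: "L \<le> l" "l \<le> R" "u \<in> Xs ! l" using inS uh(1) by blast
    show ?thesis
    proof (cases "i < L")
      case True
      then show ?thesis using conv[of i L l u] l that Rn unfolding cl_def by auto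
    next
      case False
      show ?thesis
      proof (cases "R < i")
        case True
        then show ?thesis using conv[of l R i u] l that False unfolding cl_def by auto
      next
        case False2: False
        then show ?thesis using False that unfolding cl_def by auto
      qed
    qed
  qed
  define Ys where "Ys = map (\<lambda>i. Xs ! (i - 1) \<inter> S) [Suc L..<Suc (Suc R)]"
  have lenY: "length Ys = Suc R - L" unfolding Ys_def using LR by (simp del: upt_Suc)
  have nthY: "k < length Ys \<Longrightarrow> Ys ! k = Xs ! (L + k) \<inter> S" for k
    unfolding Ys_def by (simp del: upt_Suc)
  have d1: "\<Union>(set Ys) = S"
  proof
    show "\<Union>(set Ys) \<subseteq> S" unfolding Ys_def by auto
  next
    show "S \<subseteq> \<Union>(set Ys)"
    proof
      fix u assume "u \<in> S"
      then obtain l where l: "L \<le> l" "l \<le> R" "u \<in> Xs ! l" using inS by blast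
      have "l - L < length Ys" using l lenY by simp
      moreover have "Ys ! (l - L) = Xs ! l \<inter> S" using nthY[of "l - L"] l lenY by simp
      ultimately show "u \<in> \<Union>(set Ys)" using l \<open>u \<in> S\<close> by (metis IntI UnionI nth_mem)
    qed
  qed
  have d2: "\<forall>(u, v) \<in> induced_arcs E S. \<exists>i j. i \<le> j \<and> j < length Ys \<and> u \<in> Ys ! i \<and> v \<in> Ys ! j"
  proof (clarify)
    fix u v assume "(u, v) \<in> induced_arcs E S"
    then have uv: "(u,v) \<in> E" "u \<in> S" "v \<in> S" unfolding induced_arcs_def by auto
    obtain i j where ij: "i \<le> j" "j < n" "u \<in> Xs ! i" "v \<in> Xs ! j" using edg uv(1) by blast
    have "u \<in> Xs ! cl i" using clin uv ij by auto
    moreover have "v \<in> Xs ! cl j" using clin uv ij by auto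
    moreover have "cl i \<le> cl j" using clmono ij by auto
    ultimately show "\<exists>i j. i \<le> j \<and> j < length Ys \<and> u \<in> Ys ! i \<and> v \<in> Ys ! j"
      using clR[of i] clR[of j] nthY lenY uv
      by (intro exI[of _ "cl i - L"] exI[of _ "cl j - L"]) auto
  qed
  have d3: "\<forall>u i j l. i \<le> l \<and> l \<le> j \<and> j < length Ys \<and> u \<in> Ys ! i \<and> u \<in> Ys ! j \<longrightarrow> u \<in> Ys ! l"
  proof (intro allI impI)
    fix u i j l assume h: "i \<le> l \<and> l \<le> j \<and> j < length Ys \<and> u \<in> Ys ! i \<and> u \<in> Ys ! j"
    then have "u \<in> Xs ! (L + i)" "u \<in> Xs ! (L + j)" "u \<in> S" using nthY by auto
    then have "u \<in> Xs ! (L + l)" using conv[of "L + i" "L + l" "L + j" u] h lenY Rn by auto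
    then show "u \<in> Ys ! l" using nthY h \<open>u \<in> S\<close> by auto
  qed
  have dpd: "dir_path_decomp S (induced_arcs E S) Ys"
    unfolding dir_path_decomp_def using d1 d2 d3 by blast
  have Bsub: "B \<subseteq> (\<Union>i\<in>{Suc L..Suc R}. Xs ! (i - 1))"
  proof
    fix b assume "b \<in> B"
    then obtain l where l: "L \<le> l" "l \<le> R" "b \<in> Xs ! l" using inB by blast
    then show "b \<in> (\<Union>i\<in>{Suc L..Suc R}. Xs ! (i - 1))"
      by (intro UN_I[of "Suc l"]) auto
  qed
  show ?thesis
    apply (rule exI[of _ "Suc L"], rule exI[of _ "Suc R"])
  proof (intro conjI allI impI)
    fix i assume "Suc L \<le> i \<and> i \<le> Suc R"
    then have "L \<le> i - 1" "i - 1 \<le> R" by auto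
    then show "A \<subseteq> Xs ! (i - 1)" using Amid[of "i - 1"] by blast
  qed (use LR Rn n_def Bsub dpd in \<open>auto simp: Ys_def S_def simp del: upt_Suc\<close>)
qed

end
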